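(* Let $G$ be a finite simple graph that is $(P_3\cup P_2,K_4)$-free. Let $D_1=\{x\in V(G): \omega(G-N(x))\le 2\}$. If the induced subgraph $G[D_1]$ contains an induced subgraph isomorphic to $P_2\cup P_1$, then $\chi(G)\le 7$.
   Context: $P_n$ is the path on $n$ vertices, $K_4$ the complete graph on $4$ vertices, $\cup$ disjoint union. "Free"/"contains" refer to induced subgraphs. $N(x)$ is the (open) neighborhood of $x$, and $G-N(x)$ is the subgraph induced by $V(G)\setminus N(x)$. $\omega$ denotes clique number and $\chi$ chromatic number. *)

theory Defs
  imports Main
begin

text \<open>A finite simple graph is given by a finite vertex set V and a symmetric,
irreflexive adjacency relation E (only its restriction to V matters).\<close>

definition simple_graph :: "'a set \<Rightarrow> ('a \<Rightarrow> 'a \<Rightarrow> bool) \<Rightarrow> bool" where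
  "simple_graph V E \<longleftrightarrow> finite V \<and> (\<forall>u v. E u v \<longrightarrow> E v u) \<and> (\<forall>v. \<not> E v v)"

definition contains_induced ::
  "'a set \<Rightarrow> ('a \<Rightarrow> 'a \<Rightarrow> bool) \<Rightarrow> 'b set \<Rightarrow> ('b \<Rightarrow> 'b \<Rightarrow> bool) \<Rightarrow> bool" where
  "contains_induced V E VH EH \<longleftrightarrow>
     (\<exists>f. inj_on f VH \<and> f ` VH \<subseteq> V \<and> (\<forall>u\<in>VH. \<forall>v\<in>VH. E (f u) (f v) \<longleftrightarrow> EH u v))"

definition free_of ::
  "'a set \<Rightarrow> ('a \<Rightarrow> 'a \<Rightarrow> bool) \<Rightarrow> 'b set \<Rightarrow> ('b \<Rightarrow> 'b \<Rightarrow> bool) \<Rightarrow> bool" where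
  "free_of V E VH EH \<longleftrightarrow> \<not> contains_induced V E VH EH"

definition P3_P2_V :: "nat set" where "P3_P2_V = {0,1,2,3,4}"
definition P3_P2_E :: "nat \<Rightarrow> nat \<Rightarrow> bool" where
  "P3_P2_E u v \<longleftrightarrow> {u,v} = {0,1} \<or> {u,v} = {1,2} \<or> {u,v} = {3,4}"

definition K4_V :: "nat set" where "K4_V = {0,1,2,3}"
definition K4_E :: "nat \<Rightarrow> nat \<Rightarrow> bool" where "K4_E u v \<longleftrightarrow> u \<noteq> v"

definition P2_P1_V :: "nat set" where "P2_P1_V = {0,1,2}"
definition P2_P1_E :: "nat \<Rightarrow> nat \<Rightarrow> bool" where
  "P2_P1_E u v \<longleftrightarrow> {u,v} = {0,1}"

definition nbhd :: "'a set \<Rightarrow> ('a \<Rightarrow> 'a \<Rightarrow> bool) \<Rightarrow> 'a \<Rightarrow> 'a set" where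
  "nbhd V E x = {y \<in> V. E x y}"

definition is_clique :: "'a set \<Rightarrow> ('a \<Rightarrow> 'a \<Rightarrow> bool) \<Rightarrow> 'a set \<Rightarrow> bool" where
  "is_clique V E S \<longleftrightarrow> S \<subseteq> V \<and> (\<forall>u\<in>S. \<forall>v\<in>S. u \<noteq> v \<longrightarrow> E u v)"

definition clique_number :: "'a set \<Rightarrow> ('a \<Rightarrow> 'a \<Rightarrow> bool) \<Rightarrow> nat" where
  "clique_number V E = Max {card S | S. is_clique V E S}"

definition proper_colouring :: "'a set \<Rightarrow> ('a \<Rightarrow> 'a \<Rightarrow> bool) \<Rightarrow> nat \<Rightarrow> ('a \<Rightarrow> nat) \<Rightarrow> bool" where
  "proper_colouring V E k c \<longleftrightarrow> (\<forall>v\<in>V. c v < k) \<and> (\<forall>u\<in>V. \<forall>v\<in>V. E u v \<longrightarrow> c u \<noteq> c v)"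

definition chromatic_number :: "'a set \<Rightarrow> ('a \<Rightarrow> 'a \<Rightarrow> bool) \<Rightarrow> nat" where
  "chromatic_number V E = (LEAST k. \<exists>c. proper_colouring V E k c)"

end

theory Submission
  imports Defs
begin

lemma clique_le:
  assumes "finite W" "is_clique W E S"
  shows "card S \<le> clique_number W E"
  unfolding clique_number_def
proof (rule Max_ge)
  have "{card S |S. is_clique W E S} \<subseteq> card ` Pow W"
    by (auto simp: is_clique_def)
  then show "finite {card S |S. is_clique W E S}"
    using assms(1) by (meson finite_Pow_iff finite_imageI finite_subset)
  show "card S \<in> {card S |S. is_clique W E S}" using assms(2) by blast
qed

lemma no_tri:
  assumes sg: "simple_graph V E"
    and cn: "clique_number (V - nbhd V E x) E \<le> 2"
    and V: "u \<in> V" "v \<in> V" "w \<in> V"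
    and e: "E u v" "E v w" "E u w"
    and n: "\<not> E x u" "\<not> E x v" "\<not> E x w"
  shows False
proof -
  have sym: "\<And>s t. E s t \<Longrightarrow> E t s" and irr: "\<And>s. \<not> E s s" and fin: "finite V"
    using sg by (auto simp: simple_graph_def)
  have d: "u \<noteq> v" "v \<noteq> w" "u \<noteq> w" using e irr by auto
  have "is_clique (V - nbhd V E x) E {u,v,w}"
    using V e n sym unfolding is_clique_def nbhd_def by auto
  then have "card {u,v,w} \<le> clique_number (V - nbhd V E x) E"
    using fin by (intro clique_le) auto
  moreover have "card {u,v,w} = 3" using d by auto
  ultimately show False using cn by simp
qed

lemma no_K4:
  assumes sg: "simple_graph V E"
    and fr: "free_of V E K4_V K4_E"
    and V: "a \<in> V" "b \<in> V" "u \<in> V" "v \<in> V"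
    and e: "E a b" "E a u" "E a v" "E b u" "E b v" "E u v"
  shows False
proof -
  have sym: "\<And>s t. E s t \<Longrightarrow> E t s" and irr: "\<And>s. \<not> E s s"
    using sg by (auto simp: simple_graph_def)
  have e2: "E b a" "E u a" "E v a" "E u b" "E v b" "E v u" using e sym by auto
  have d: "a \<noteq> b" "a \<noteq> u" "a \<noteq> v" "b \<noteq> u" "b \<noteq> v" "u \<noteq> v"
    using e irr by metis+
  define f where "f = (\<lambda>i::nat. [a,b,u,v] ! i)"
  have "contains_induced V E K4_V K4_E"
    unfolding contains_induced_def
  proof (intro exI conjI)
    show "inj_on f K4_V" using d unfolding inj_on_def K4_V_def f_def by auto
    show "f ` K4_V \<subseteq> V" using V unfolding K4_V_def f_def by auto
    show "\<forall>i\<in>K4_V. \<forall>j\<in>K4_V. E (f i) (f j) = K4_E i j"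
      using e e2 irr unfolding K4_V_def K4_E_def f_def by auto
  qed
  then show False using fr by (simp add: free_of_def)
qed

lemma no_P3P2:
  assumes sg: "simple_graph V E"
    and fr: "free_of V E P3_P2_V P3_P2_E"
    and V: "p \<in> V" "q \<in> V" "r \<in> V" "a \<in> V" "b \<in> V"
    and e: "E p q" "E q r" "\<not> E p r" "p \<noteq> r" "E a b"
    and n: "\<not> E p a" "\<not> E p b" "\<not> E q a" "\<not> E q b" "\<not> E r a" "\<not> E r b"
  shows False
proof -
  have sym: "\<And>s t. E s t \<Longrightarrow> E t s" and irr: "\<And>s. \<not> E s s"
    using sg by (auto simp: simple_graph_def)
  have e2: "E q p" "E r q" "\<not> E r p" "E b a" "\<not> E a p" "\<not> E b p" "\<not> E a q"
     "\<not> E b q" "\<not> E a r" "\<not> E b r" using e n sym by metis+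
  have d: "p \<noteq> q" "q \<noteq> r" "p \<noteq> a" "p \<noteq> b" "q \<noteq> a" "q \<noteq> b" "r \<noteq> a" "r \<noteq> b"
    "a \<noteq> b" "p \<noteq> r"
    using e n e2 irr by metis+
  define f where "f = (\<lambda>i::nat. [p,q,r,a,b] ! i)"
  have "contains_induced V E P3_P2_V P3_P2_E"
    unfolding contains_induced_def
  proof (intro exI conjI)
    show "inj_on f P3_P2_V" using d unfolding inj_on_def P3_P2_V_def f_def by auto
    show "f ` P3_P2_V \<subseteq> V" using V unfolding P3_P2_V_def f_def by auto
    show "\<forall>i\<in>P3_P2_V. \<forall>j\<in>P3_P2_V. E (f i) (f j) = P3_P2_E i j"
      using e e2 n irr unfolding P3_P2_V_def P3_P2_E_def f_def
      by (simp add: doubleton_eq_iff)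
  qed
  then show False using fr by (simp add: free_of_def)
qed

theorem theorem1p1:
  fixes V :: "'a set" and E :: "'a \<Rightarrow> 'a \<Rightarrow> bool"
  assumes "simple_graph V E"
    and "free_of V E P3_P2_V P3_P2_E"
    and "free_of V E K4_V K4_E"
    and "contains_induced {x \<in> V. clique_number (V - nbhd V E x) E \<le> 2} E P2_P1_V P2_P1_E"
  shows "chromatic_number V E \<le> 7"
proof -
  note sg = assms(1) and fP = assms(2) and fK = assms(3)
  have sym: "\<And>s t. E s t \<Longrightarrow> E t s" and irr: "\<And>s. \<not> E s s" and fin: "finite V"
    using sg by (auto simp: simple_graph_def)
  obtain h where h: "inj_on h P2_P1_V" "h ` P2_P1_V \<subseteq> {x \<in> V. clique_number (V - nbhd V E x) E \<le> 2}"
    "\<forall>u\<in>P2_P1_V. \<forall>v\<in>P2_P1_V. E (h u) (h v) \<longleftrightarrow> P2_P1_E u v"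
    using assms(4) unfolding contains_induced_def by blast
  define a where "a = h 0"
  define b where "b = h 1"
  define c where "c = h 2"
  have aV: "a \<in> V" and ca: "clique_number (V - nbhd V E a) E \<le> 2"
    using h(2) unfolding a_def P2_P1_V_def by auto
  have bV: "b \<in> V" and cb: "clique_number (V - nbhd V E b) E \<le> 2"
    using h(2) unfolding b_def P2_P1_V_def by auto
  have cV: "c \<in> V" and cc: "clique_number (V - nbhd V E c) E \<le> 2"
    using h(2) unfolding c_def P2_P1_V_def by auto
  have ab: "E a b" using h(3) unfolding a_def b_def P2_P1_V_def P2_P1_E_def by auto
  have nca: "\<not> E c a" "\<not> E a c" using h(3) unfolding a_def c_def P2_P1_V_def P2_P1_E_def
    by (auto simp: doubleton_eq_iff)
  have ncb: "\<not> E c b" "\<not> E b c" using h(3) unfolding b_def c_def P2_P1_V_def P2_P1_E_def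
    by (auto simp: doubleton_eq_iff)
  obtain g :: "'a \<Rightarrow> nat" where g: "inj_on g V"
    using finite_imp_inj_to_nat_seg[OF fin] by blast
  define R where "R = (\<lambda>w. w \<in> V \<and> \<not> E c w \<and> \<not> E a w \<and> \<not> E b w)"
  have uniq: "w1 = w2" if "R v" "R w1" "R w2" "E v w1" "E v w2" for v w1 w2
  proof (rule ccontr)
    assume ne: "w1 \<noteq> w2"
    show False
    proof (cases "E w1 w2")
      case True
      then show False using no_tri[OF sg ca, of v w1 w2] that sym unfolding R_def by blast
    next
      case False
      then show False using no_P3P2[OF sg fP, of w1 v w2 a b] that sym ne ab aV bV
        unfolding R_def by blast
    qed
  qed
  define col where "col = (\<lambda>v. if E c v then (if \<not> E a v then 0 else if \<not> E b v then 1 else 2)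
     else if E a v then 3 else if E b v then 4
     else if (\<forall>w. R w \<and> E v w \<longrightarrow> g v < g w) then 5 else (6::nat))"
  have "proper_colouring V E 7 col"
    unfolding proper_colouring_def
  proof (intro conjI ballI impI)
    fix v assume "v \<in> V" show "col v < 7" unfolding col_def by auto
  next
    fix u v assume uV: "u \<in> V" and vV: "v \<in> V" and uv: "E u v"
    have vu: "E v u" using uv sym by blast
    show "col u \<noteq> col v"
    proof
      assume eq: "col u = col v"
      consider "E c u" "E c v" "\<not> E a u" "\<not> E a v"
        | "E c u" "E c v" "E a u" "E a v" "\<not> E b u" "\<not> E b v"
        | "E c u" "E c v" "E a u" "E a v" "E b u" "E b v"
        | "\<not> E c u" "\<not> E c v" "E a u" "E a v"
        | "\<not> E c u" "\<not> E c v" "\<not> E a u" "\<not> E a v" "E b u" "E b v"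
        | "R u" "R v"
        using eq uV vV unfolding col_def R_def by (auto split: if_splits)
      then show False
      proof cases
        case 1 then show ?thesis using no_tri[OF sg ca, of c u v] cV uV vV uv nca by blast
      next
        case 2 then show ?thesis using no_tri[OF sg cb, of c u v] cV uV vV uv ncb by blast
      next
        case 3 then show ?thesis using no_K4[OF sg fK, of a b u v] aV bV uV vV uv ab by blast
      next
        case 4 then show ?thesis using no_tri[OF sg cc, of a u v] aV uV vV uv nca sym by blast
      next
        case 5 then show ?thesis using no_tri[OF sg cc, of b u v] bV uV vV uv ncb sym by blast
      next
        case 6
        have cu: "col u = (if (\<forall>w. R w \<and> E u w \<longrightarrow> g u < g w) then 5 else 6)"
          using 6 unfolding col_def R_def by auto
        have cv: "col v = (if (\<forall>w. R w \<and> E v w \<longrightarrow> g v < g w) then 5 else 6)"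
          using 6 unfolding col_def R_def by auto
        show False
        proof (cases "\<forall>w. R w \<and> E u w \<longrightarrow> g u < g w")
          case True
          then have "g u < g v" using 6 uv by blast
          moreover have "g v < g u" using eq cu cv True 6 vu by (auto split: if_splits)
          ultimately show False by simp
        next
          case False
          then obtain w where w: "R w" "E u w" "\<not> g u < g w" by blast
          have "w = v" using uniq[of u w v] 6 w uv by blast
          moreover obtain w' where w': "R w'" "E v w'" "\<not> g v < g w'"
            using eq cu cv False by (auto split: if_splits)
          moreover have "w' = u" using uniq[of v w' u] 6 w' vu by blast
          ultimately have "g u = g v" using w by simp
          then show False using g uV vV irr uv by (metis inj_onD)
        qed
      qed
    qed
  qed
  then show ?thesis unfolding chromatic_number_def by (intro Least_le) blast
qed

end
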